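(* Let $(X,d)$ be a complete metric space, $0<\rho<1$, and $\mu(x,y)=x\#y$ a nonexpansive, coordinatewise $\rho$-contractive 2-mean on $X$ satisfying the limited medial property. Let $n\ge2$, $m\in X$, and $\mathbf{x}=(x_1,\ldots,x_n),\mathbf{y}=(y_1,\ldots,y_n)\in X^n$ with $x_i\#y_i=m$ for all $1\le i\le n$. Then $\mu_n(\mathbf{x})\#\mu_n(\mathbf{y})=m$.
   Context: A $k$-mean is a map $\mu:X^k\to X$ with $\mu(x,\ldots,x)=x$. Nonexpansive: $d(\mu(\mathbf{x}),\mu(\mathbf{y}))\le\max_j d(x_j,y_j)$; coordinatewise $\rho$-contractive: $d(\mu(\mathbf{x}),\mu(\mathbf{y}))\le\rho\,d(x_j,y_j)$ when $\mathbf{x},\mathbf{y}$ differ only in coordinate $j$. A 2-mean $\#$ has the limited medial property if $a\#b=x\#y=m$ implies $(a\#x)\#(b\#y)=m$. $\mu_2=\mu$, and $\mu_{n+1}$ is the unique continuous $\beta$-extension of $\mu_n$, where for a $k$-mean $\mu$ the barycentric operator is $\beta(\mathbf{z})_j=\mu(z_1,\ldots,\widehat{z_j},\ldots,z_{k+1})$ and a $(k+1)$-mean $\tilde\mu$ $\beta$-extends $\mu$ if $\beta^r(\mathbf{z})\to(\tilde\mu(\mathbf{z}),\ldots,\tilde\mu(\mathbf{z}))$ for all $\mathbf{z}$. *)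

theory Defs
  imports "HOL-Analysis.Analysis"
begin

text \<open>A k-mean on X (here the whole type) is represented as a function on lists,
  only its values on lists of length k are meaningful.\<close>

definition is_kmean :: "nat \<Rightarrow> ('a list \<Rightarrow> 'a) \<Rightarrow> bool" where
  "is_kmean k f \<longleftrightarrow> (\<forall>x. f (replicate k x) = x)"

text \<open>Continuity of a k-mean on X^k (product topology), stated sequentially
  (equivalent, since X^k is metrizable).\<close>
definition kcontinuous :: "nat \<Rightarrow> ('a::metric_space list \<Rightarrow> 'a) \<Rightarrow> bool" where
  "kcontinuous k f \<longleftrightarrow>
     (\<forall>zs (s::nat \<Rightarrow> 'a list). length zs = k \<longrightarrow> (\<forall>r. length (s r) = k) \<longrightarrow>
        (\<forall>j<k. (\<lambda>r. s r ! j) \<longlonglongrightarrow> zs ! j) \<longrightarrow> (\<lambda>r. f (s r)) \<longlonglongrightarrow> f zs)"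

definition beta_op :: "nat \<Rightarrow> ('a list \<Rightarrow> 'a) \<Rightarrow> 'a list \<Rightarrow> 'a list" where
  "beta_op k f zs = map (\<lambda>j. f (take j zs @ drop (Suc j) zs)) [0..<Suc k]"

definition beta_extends :: "nat \<Rightarrow> ('a::metric_space list \<Rightarrow> 'a) \<Rightarrow> ('a list \<Rightarrow> 'a) \<Rightarrow> bool" where
  "beta_extends k f g \<longleftrightarrow>
     (\<forall>zs. length zs = Suc k \<longrightarrow>
        (\<forall>j<Suc k. (\<lambda>r. ((beta_op k f ^^ r) zs) ! j) \<longlonglongrightarrow> g zs))"

definition beta_ext :: "nat \<Rightarrow> ('a::metric_space list \<Rightarrow> 'a) \<Rightarrow> ('a list \<Rightarrow> 'a)" where
  "beta_ext k f = (THE h. \<exists>g. is_kmean (Suc k) g \<and> kcontinuous (Suc k) g \<and> beta_extends k f g \<and>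
                     h = (\<lambda>zs. if length zs = Suc k then g zs else undefined))"

primrec mu_n :: "('a::metric_space \<Rightarrow> 'a \<Rightarrow> 'a) \<Rightarrow> nat \<Rightarrow> 'a list \<Rightarrow> 'a" where
  "mu_n mu 0 = (\<lambda>xs. mu (xs ! 0) (xs ! 1))"
| "mu_n mu (Suc n) = (if Suc n \<le> 2 then (\<lambda>xs. mu (xs ! 0) (xs ! 1)) else beta_ext n (mu_n mu n))"

end

theory Submission
  imports Defs
begin

lemma tends0_bound:
  fixes a b :: "nat \<Rightarrow> real"
  assumes "\<And>r. 0 \<le> a r" "\<And>r. a r \<le> b r" "b \<longlonglongrightarrow> 0"
  shows "a \<longlonglongrightarrow> 0"
  by (rule tendsto_sandwich[of "\<lambda>_. 0" a sequentially b]) (use assms in auto)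

lemma dist_bound_tendsto:
  assumes "\<And>r. dist (x r) L \<le> b r" "b \<longlonglongrightarrow> 0"
  shows "x \<longlonglongrightarrow> L"
proof -
  have "(\<lambda>r. dist (x r) L) \<longlonglongrightarrow> 0"
  proof (rule tends0_bound)
    show "0 \<le> dist (x r) L" for r by simp
    show "dist (x r) L \<le> b r" for r by (rule assms(1))
    show "b \<longlonglongrightarrow> 0" by (rule assms(2))
  qed
  then show ?thesis by (rule tendsto_dist_iff[THEN iffD2])
qed

lemma geom_cauchy:
  fixes s :: "nat \<Rightarrow> 'a::metric_space" and \<rho> C :: real
  assumes r: "0 \<le> \<rho>" "\<rho> < 1" and C: "0 \<le> C"
    and st: "\<And>r. dist (s (Suc r)) (s r) \<le> C * \<rho> ^ r"
  shows "Cauchy s"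
proof -
  define t where "t n = C * \<rho> ^ n / (1 - \<rho>)" for n
  have tt: "t n - t (Suc n) = C * \<rho> ^ n" for n
  proof -
    have "t n - t (Suc n) = (C * \<rho> ^ n - C * \<rho> ^ Suc n) / (1 - \<rho>)"
      by (simp add: t_def diff_divide_distrib)
    also have "\<dots> = C * \<rho> ^ n * (1 - \<rho>) / (1 - \<rho>)" by (simp add: algebra_simps)
    also have "\<dots> = C * \<rho> ^ n" using r by simp
    finally show ?thesis .
  qed
  have d: "dist (s m) (s (m + n)) \<le> t m - t (m + n)" for m n
  proof (induction n)
    case 0 then show ?case by simp
  next
    case (Suc n)
    have "dist (s m) (s (m + Suc n)) \<le> dist (s m) (s (m + n)) + dist (s (m + n)) (s (Suc (m + n)))"
      using dist_triangle by simp
    also have "\<dots> \<le> t m - t (m + n) + C * \<rho> ^ (m + n)"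
      using Suc st[of "m+n"] by (simp add: dist_commute)
    also have "\<dots> = t m - t (m + Suc n)" using tt[of "m+n"] by simp
    finally show ?case .
  qed
  have tpos: "0 \<le> t n" for n using r C by (simp add: t_def)
  have t0: "t \<longlonglongrightarrow> 0"
  proof -
    have "(\<lambda>n. C / (1 - \<rho>) * \<rho> ^ n) \<longlonglongrightarrow> C / (1 - \<rho>) * 0"
      by (intro tendsto_mult tendsto_const LIMSEQ_power_zero) (use r in auto)
    then have "(\<lambda>n. t n) \<longlonglongrightarrow> 0" by (simp add: t_def field_simps)
    then show ?thesis by simp
  qed
  show ?thesis
  proof (rule metric_CauchyI)
    fix e :: real assume "0 < e"
    from LIMSEQ_D[OF t0, of "e/2"] \<open>0 < e\<close> obtain M where M0: "\<And>n. n \<ge> M \<Longrightarrow> norm (t n - 0) < e / 2"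
      by auto
    have M: "t n < e / 2" if "n \<ge> M" for n using M0[OF that] tpos[of n] by simp
    show "\<exists>M. \<forall>m\<ge>M. \<forall>n\<ge>M. dist (s m) (s n) < e"
    proof (intro exI allI impI)
      fix m n assume mn: "m \<ge> M" "n \<ge> M"
      have "dist (s m) (s n) \<le> dist (s M) (s m) + dist (s M) (s n)"
        by (rule dist_triangle3)
      also have "\<dots> \<le> t M + t M"
        using d[of M "m - M"] d[of M "n - M"] mn tpos[of m] tpos[of n] by simp
      also have "\<dots> < e" using M[of M] by simp
      finally show "dist (s m) (s n) < e" .
    qed
  qed
qed

definition rm :: "nat \<Rightarrow> 'a list \<Rightarrow> 'a list" where
  "rm j zs = take j zs @ drop (Suc j) zs"

lemma length_rm: "j < length zs \<Longrightarrow> length (rm j zs) = length zs - 1"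
  by (simp add: rm_def)

lemma nth_rm: "j < length zs \<Longrightarrow> p < length zs - 1 \<Longrightarrow>
   rm j zs ! p = (if p < j then zs ! p else zs ! Suc p)"
  by (auto simp: rm_def nth_append min_def)

lemma beta_op_rm: "beta_op k f zs = map (\<lambda>j. f (rm j zs)) [0..<Suc k]"
  by (simp add: beta_op_def rm_def)

lemma length_beta[simp]: "length (beta_op k f zs) = Suc k"
  by (simp add: beta_op_def)

lemma nth_beta: "j < Suc k \<Longrightarrow> beta_op k f zs ! j = f (rm j zs)"
  by (simp add: beta_op_rm del: upt_Suc)

lemma rm_adj: "Suc i < length zs \<Longrightarrow> rm i zs = (rm (Suc i) zs)[i := zs ! Suc i]"
  by (rule nth_equalityI) (auto simp: length_rm nth_rm nth_list_update)

lemma rm_adj2: "Suc i < length zs \<Longrightarrow> rm (Suc i) zs ! i = zs ! i"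
  by (simp add: nth_rm)

lemma rm_upd_same: "j < length zs \<Longrightarrow> rm j (zs[j := y]) = rm j zs"
  by (rule nth_equalityI) (auto simp: length_rm nth_rm nth_list_update)

lemma rm_upd_lt: "i < j \<Longrightarrow> j < length zs \<Longrightarrow> rm i (zs[j := y]) = (rm i zs)[j - 1 := y]"
  by (rule nth_equalityI) (auto simp: length_rm nth_rm nth_list_update)

lemma rm_upd_gt: "j < i \<Longrightarrow> i < length zs \<Longrightarrow> rm i (zs[j := y]) = (rm i zs)[j := y]"
  by (rule nth_equalityI) (auto simp: length_rm nth_rm nth_list_update)

lemma rep_rm: "j < n \<Longrightarrow> rm j (replicate n x) = replicate (n - 1) x"
  by (rule nth_equalityI) (auto simp: length_rm nth_rm)


definition glim :: "nat \<Rightarrow> ('a::metric_space list \<Rightarrow> 'a) \<Rightarrow> 'a list \<Rightarrow> 'a" where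
  "glim k f zs = lim (\<lambda>r. (beta_op k f ^^ r) zs ! 0)"

lemma diam_gen:
  fixes zs :: "'a::metric_space list"
  assumes l: "length zs = Suc k" and a: "\<And>i. i < k \<Longrightarrow> dist (zs!i) (zs!Suc i) \<le> a" and a0: "0 \<le> a"
    and p: "p < Suc k" and q: "q < Suc k"
  shows "dist (zs!p) (zs!q) \<le> k * a"
proof -
  have gen: "dist (zs!i) (zs!j) \<le> real (j - i) * a" if "i \<le> j" "j < Suc k" for i j
    using that
  proof (induction j)
    case 0 then show ?case by simp
  next
    case (Suc j)
    show ?case
    proof (cases "i = Suc j")
      case True then show ?thesis by simp
    next
      case False
      then have ij: "i \<le> j" using Suc by simp
      have "dist (zs!i) (zs!Suc j) \<le> dist (zs!i) (zs!j) + dist (zs!j) (zs!Suc j)" by (rule dist_triangle)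
      also have "\<dots> \<le> real (j - i) * a + a" using Suc ij a[of j] by simp
      also have "\<dots> = real (Suc j - i) * a" using ij by (simp add: Suc_diff_le algebra_simps)
      finally show ?thesis .
    qed
  qed
  show ?thesis
  proof (cases "p \<le> q")
    case True
    have "dist (zs!p) (zs!q) \<le> real (q - p) * a" using gen[OF True q] .
    also have "\<dots> \<le> k * a" using q a0 by (intro mult_right_mono) auto
    finally show ?thesis .
  next
    case False
    have "dist (zs!p) (zs!q) \<le> real (p - q) * a" using gen[of q p] False p by (simp add: dist_commute)
    also have "\<dots> \<le> k * a" using p a0 by (intro mult_right_mono) auto
    finally show ?thesis .
  qed
qed


locale MS =
  fixes mu :: "'a::complete_space \<Rightarrow> 'a \<Rightarrow> 'a" and \<rho> :: real
  assumes rho: "0 < \<rho>" "\<rho> < 1"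
    and mu_nonexp: "\<And>a b c d. dist (mu a b) (mu c d) \<le> max (dist a c) (dist b d)"
begin

definition good :: "nat \<Rightarrow> ('a list \<Rightarrow> 'a) \<Rightarrow> bool" where
  "good k f \<longleftrightarrow>
    (\<forall>x. f (replicate k x) = x) \<and>
    (\<forall>xs ys D. length xs = k \<longrightarrow> length ys = k \<longrightarrow> (\<forall>i<k. dist (xs!i) (ys!i) \<le> D) \<longrightarrow> dist (f xs) (f ys) \<le> D) \<and>
    (\<forall>xs j y. length xs = k \<longrightarrow> j < k \<longrightarrow> dist (f xs) (f (xs[j := y])) \<le> \<rho> * dist (xs!j) y) \<and>
    (\<forall>xs ys m'. length xs = k \<longrightarrow> length ys = k \<longrightarrow> (\<forall>i<k. mu (xs!i) (ys!i) = m') \<longrightarrow> mu (f xs) (f ys) = m')"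

lemma good_cong: "good k f \<Longrightarrow> (\<And>xs. length xs = k \<Longrightarrow> g xs = f xs) \<Longrightarrow> good k g"
  unfolding good_def by simp

context
  fixes k :: nat and f :: "'a list \<Rightarrow> 'a"
  assumes gf: "good k f"
begin

lemma f_mean: "f (replicate k x) = x" using gf by (simp add: good_def)
lemma f_nonexp: "length xs = k \<Longrightarrow> length ys = k \<Longrightarrow> (\<And>i. i<k \<Longrightarrow> dist (xs!i) (ys!i) \<le> D) \<Longrightarrow> dist (f xs) (f ys) \<le> D"
  using gf unfolding good_def by blast
lemma f_contr: "length xs = k \<Longrightarrow> j < k \<Longrightarrow> dist (f xs) (f (xs[j := y])) \<le> \<rho> * dist (xs!j) y"
  using gf unfolding good_def by blast
lemma f_pair: "length xs = k \<Longrightarrow> length ys = k \<Longrightarrow> (\<And>i. i<k \<Longrightarrow> mu (xs!i) (ys!i) = m') \<Longrightarrow> mu (f xs) (f ys) = m'"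
  using gf unfolding good_def by blast

abbreviation B where "B \<equiv> beta_op k f"

lemma adj_step:
  assumes l: "length zs = Suc k" and a: "\<And>i. i < k \<Longrightarrow> dist (zs!i) (zs!Suc i) \<le> a" and i: "i < k"
  shows "dist (B zs ! i) (B zs ! Suc i) \<le> \<rho> * a"
proof -
  have "B zs ! i = f ((rm (Suc i) zs)[i := zs ! Suc i])"
    using i l by (simp add: nth_beta rm_adj[symmetric])
  moreover have "B zs ! Suc i = f (rm (Suc i) zs)" using i by (simp add: nth_beta)
  ultimately have "dist (B zs ! i) (B zs ! Suc i) = dist (f (rm (Suc i) zs)) (f ((rm (Suc i) zs)[i := zs ! Suc i]))"
    by (simp add: dist_commute)
  also have "\<dots> \<le> \<rho> * dist (rm (Suc i) zs ! i) (zs ! Suc i)"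
    by (rule f_contr) (use i l in \<open>auto simp: length_rm\<close>)
  also have "\<dots> = \<rho> * dist (zs ! i) (zs ! Suc i)" using i l by (simp add: rm_adj2)
  also have "\<dots> \<le> \<rho> * a" using a[OF i] rho by simp
  finally show ?thesis .
qed

lemma nonexp_step:
  assumes l: "length zs = Suc k" "length ws = Suc k"
    and D: "\<And>i. i < Suc k \<Longrightarrow> dist (zs!i) (ws!i) \<le> D" and i: "i < Suc k"
  shows "dist (B zs ! i) (B ws ! i) \<le> D"
  using i l by (simp add: nth_beta, intro f_nonexp) (auto simp: length_rm nth_rm D)

lemma close_step:
  assumes l: "length zs = Suc k"
    and D: "\<And>p q. p < Suc k \<Longrightarrow> q < Suc k \<Longrightarrow> dist (zs!p) (zs!q) \<le> D" and i: "i < Suc k"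
  shows "dist (B zs ! i) (zs ! i) \<le> D"
proof -
  have "dist (f (rm i zs)) (f (replicate k (zs ! i))) \<le> D"
    by (rule f_nonexp) (use i l in \<open>auto simp: length_rm nth_rm D\<close>)
  then show ?thesis using i by (simp add: nth_beta f_mean)
qed

lemma pair_step:
  assumes l: "length zs = Suc k" "length ws = Suc k"
    and P: "\<And>i. i < Suc k \<Longrightarrow> mu (zs!i) (ws!i) = m'" and i: "i < Suc k"
  shows "mu (B zs ! i) (B ws ! i) = m'"
  using i l by (simp add: nth_beta, intro f_pair) (auto simp: length_rm nth_rm P)

lemma rep_step: "B (replicate (Suc k) x) = replicate (Suc k) x"
  by (rule nth_equalityI) (auto simp: nth_beta rep_rm f_mean simp del: replicate_Suc)

lemma contr_step:
  assumes l: "length zs = Suc k" and j: "j < Suc k" and i: "i < Suc k"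
  shows "dist (B zs ! i) (B (zs[j := y]) ! i) \<le> \<rho> * dist (zs!j) y"
proof -
  consider "i = j" | "i < j" | "j < i" by linarith
  then show ?thesis
  proof cases
    case 1 then show ?thesis using i j l rho by (simp add: nth_beta rm_upd_same)
  next
    case 2
    have "dist (f (rm i zs)) (f ((rm i zs)[j - 1 := y])) \<le> \<rho> * dist (rm i zs ! (j - 1)) y"
      by (rule f_contr) (use 2 i j l in \<open>auto simp: length_rm\<close>)
    moreover have "rm i zs ! (j - 1) = zs ! j"
    proof -
      have "\<not> j - 1 < i" "Suc (j - 1) = j" using 2 by arith+
      then show ?thesis using 2 i j l by (simp add: nth_rm)
    qed
    ultimately show ?thesis using 2 i j l by (simp add: nth_beta rm_upd_lt)
  next
    case 3
    have "dist (f (rm i zs)) (f ((rm i zs)[j := y])) \<le> \<rho> * dist (rm i zs ! j) y"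
      by (rule f_contr) (use 3 i j l in \<open>auto simp: length_rm\<close>)
    then show ?thesis using 3 i j l by (simp add: nth_beta rm_upd_gt nth_rm)
  qed
qed


lemma len_S: "length zs = Suc k \<Longrightarrow> length ((B ^^ r) zs) = Suc k"
  by (cases r) auto

definition a0 :: "'a list \<Rightarrow> real" where "a0 zs = (\<Sum>i<k. dist (zs!i) (zs!Suc i))"

lemma a0_nonneg: "0 \<le> a0 zs" unfolding a0_def by (intro sum_nonneg) auto

lemma adj_S: "length zs = Suc k \<Longrightarrow> i < k \<Longrightarrow> dist ((B ^^ r) zs ! i) ((B ^^ r) zs ! Suc i) \<le> \<rho> ^ r * a0 zs"
proof (induction r arbitrary: i)
  case 0
  then show ?case unfolding a0_def
    by simp (rule member_le_sum, auto)
next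
  case (Suc r)
  have "dist (B ((B ^^ r) zs) ! i) (B ((B ^^ r) zs) ! Suc i) \<le> \<rho> * (\<rho> ^ r * a0 zs)"
    by (rule adj_step) (use Suc len_S in auto)
  then show ?case by (simp add: mult.assoc)
qed

lemma diam_S: "length zs = Suc k \<Longrightarrow> p < Suc k \<Longrightarrow> q < Suc k \<Longrightarrow>
   dist ((B ^^ r) zs ! p) ((B ^^ r) zs ! q) \<le> k * (\<rho> ^ r * a0 zs)"
  by (rule diam_gen) (use len_S adj_S a0_nonneg rho in auto)

lemma step_S: "length zs = Suc k \<Longrightarrow> i < Suc k \<Longrightarrow>
   dist ((B ^^ Suc r) zs ! i) ((B ^^ r) zs ! i) \<le> k * (\<rho> ^ r * a0 zs)"
  using close_step[OF len_S diam_S] by simp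

lemma geo0: "(\<lambda>r. real k * (\<rho> ^ r * c)) \<longlonglongrightarrow> 0"
proof -
  have "(\<lambda>r. real k * c * \<rho> ^ r) \<longlonglongrightarrow> real k * c * 0"
    by (intro tendsto_mult tendsto_const LIMSEQ_power_zero) (use rho in auto)
  then show ?thesis by (simp add: mult_ac)
qed

lemma conv_S:
  assumes l: "length zs = Suc k" and i: "i < Suc k"
  shows "(\<lambda>r. (B ^^ r) zs ! i) \<longlonglongrightarrow> glim k f zs"
proof -
  have cy: "Cauchy (\<lambda>r. (B ^^ r) zs ! 0)"
    by (rule geom_cauchy[of \<rho> "k * a0 zs"]) (use rho a0_nonneg step_S[OF l] in \<open>auto simp: mult_ac\<close>)
  have c0: "(\<lambda>r. (B ^^ r) zs ! 0) \<longlonglongrightarrow> glim k f zs"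
    using Cauchy_convergent[OF cy] unfolding glim_def convergent_LIMSEQ_iff .
  then have d0: "(\<lambda>r. dist ((B ^^ r) zs ! 0) (glim k f zs)) \<longlonglongrightarrow> 0"
    by (rule tendsto_dist_iff[THEN iffD1])
  show ?thesis
  proof (rule dist_bound_tendsto)
    fix r
    show "dist ((B ^^ r) zs ! i) (glim k f zs) \<le> k * (\<rho> ^ r * a0 zs) + dist ((B ^^ r) zs ! 0) (glim k f zs)"
      using dist_triangle[of "(B ^^ r) zs ! i" "glim k f zs" "(B ^^ r) zs ! 0"] diam_S[OF l i, of 0 r] by simp
  next
    show "(\<lambda>r. k * (\<rho> ^ r * a0 zs) + dist ((B ^^ r) zs ! 0) (glim k f zs)) \<longlonglongrightarrow> 0"
      using tendsto_add_zero[OF geo0 d0] by simp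
  qed
qed

lemma gl_extends: "beta_extends k f (glim k f)"
  unfolding beta_extends_def using conv_S by blast

lemma rep_S: "(B ^^ r) (replicate (Suc k) x) = replicate (Suc k) x"
  by (induction r) (simp_all add: rep_step del: replicate_Suc)

lemma gl_mean: "glim k f (replicate (Suc k) x) = x"
proof -
  have "(\<lambda>r. (B ^^ r) (replicate (Suc k) x) ! 0) \<longlonglongrightarrow> glim k f (replicate (Suc k) x)"
    by (rule conv_S) auto
  then have "(\<lambda>r. x) \<longlonglongrightarrow> glim k f (replicate (Suc k) x)"
    by (simp add: rep_S del: replicate_Suc)
  then show ?thesis using LIMSEQ_unique tendsto_const by metis
qed

lemma gl_nonexp:
  assumes l: "length zs = Suc k" "length ws = Suc k"
    and D: "\<And>i. i < Suc k \<Longrightarrow> dist (zs!i) (ws!i) \<le> D"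
  shows "dist (glim k f zs) (glim k f ws) \<le> D"
proof -
  have all: "\<forall>i<Suc k. dist ((B ^^ r) zs ! i) ((B ^^ r) ws ! i) \<le> D" for r
  proof (induction r)
    case 0 then show ?case using D by simp
  next
    case (Suc r)
    then show ?case using nonexp_step[OF len_S[OF l(1)] len_S[OF l(2)], of r r D] by simp
  qed
  have "(\<lambda>r. dist ((B ^^ r) zs ! 0) ((B ^^ r) ws ! 0)) \<longlonglongrightarrow> dist (glim k f zs) (glim k f ws)"
    by (intro tendsto_dist conv_S) (use l in auto)
  then show ?thesis by (rule LIMSEQ_le_const2) (use all in auto)
qed

lemma gl_shift:
  assumes l: "length zs = Suc k"
  shows "glim k f (B zs) = glim k f zs"
proof -
  have "(\<lambda>r. (B ^^ r) (B zs) ! 0) \<longlonglongrightarrow> glim k f (B zs)" by (rule conv_S) auto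
  moreover have "(\<lambda>r. (B ^^ Suc r) zs ! 0) \<longlonglongrightarrow> glim k f zs"
    using LIMSEQ_Suc[OF conv_S[OF l, of 0]] by simp
  moreover have "(\<lambda>r. (B ^^ Suc r) zs ! 0) = (\<lambda>r. (B ^^ r) (B zs) ! 0)"
    by (simp only: funpow_Suc_right o_apply)
  ultimately show ?thesis using LIMSEQ_unique by simp
qed

lemma gl_contr:
  assumes l: "length zs = Suc k" and j: "j < Suc k"
  shows "dist (glim k f zs) (glim k f (zs[j := y])) \<le> \<rho> * dist (zs!j) y"
proof -
  have "dist (glim k f (B zs)) (glim k f (B (zs[j := y]))) \<le> \<rho> * dist (zs!j) y"
    by (rule gl_nonexp) (use contr_step[OF l j] in auto)
  moreover have "glim k f (B zs) = glim k f zs" by (rule gl_shift[OF l])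
  moreover have "glim k f (B (zs[j := y])) = glim k f (zs[j := y])" by (rule gl_shift) (use l in simp)
  ultimately show ?thesis by (simp only:)
qed

lemma mu_cont:
  assumes "a \<longlonglongrightarrow> x" "b \<longlonglongrightarrow> y"
  shows "(\<lambda>r. mu (a r) (b r)) \<longlonglongrightarrow> mu x y"
proof (rule dist_bound_tendsto)
  fix r show "dist (mu (a r) (b r)) (mu x y) \<le> dist (a r) x + dist (b r) y"
    using mu_nonexp[of "a r" "b r" x y] zero_le_dist[of "a r" x] zero_le_dist[of "b r" y] by linarith
next
  show "(\<lambda>r. dist (a r) x + dist (b r) y) \<longlonglongrightarrow> 0"
    using tendsto_dist_iff[THEN iffD1, OF assms(1)] tendsto_dist_iff[THEN iffD1, OF assms(2)]
    by (rule tendsto_add_zero)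
qed

lemma gl_pair:
  assumes l: "length zs = Suc k" "length ws = Suc k"
    and P: "\<And>i. i < Suc k \<Longrightarrow> mu (zs!i) (ws!i) = m'"
  shows "mu (glim k f zs) (glim k f ws) = m'"
proof -
  have all: "\<forall>i<Suc k. mu ((B ^^ r) zs ! i) ((B ^^ r) ws ! i) = m'" for r
  proof (induction r)
    case 0 then show ?case using P by simp
  next
    case (Suc r)
    then show ?case using pair_step[OF len_S[OF l(1)] len_S[OF l(2)], of r r m'] by simp
  qed
  have "(\<lambda>r. mu ((B ^^ r) zs ! 0) ((B ^^ r) ws ! 0)) \<longlonglongrightarrow> mu (glim k f zs) (glim k f ws)"
    by (intro mu_cont conv_S) (use l in auto)
  then have "(\<lambda>r. m') \<longlonglongrightarrow> mu (glim k f zs) (glim k f ws)" using all by simp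
  then show ?thesis using LIMSEQ_unique tendsto_const by metis
qed

lemma gl_cont: "kcontinuous (Suc k) (glim k f)"
  unfolding kcontinuous_def
proof (intro allI impI)
  fix zs and s :: "nat \<Rightarrow> 'a list"
  assume l: "length zs = Suc k" and ls: "\<forall>r. length (s r) = Suc k"
    and c: "\<forall>j<Suc k. (\<lambda>r. s r ! j) \<longlonglongrightarrow> zs ! j"
  show "(\<lambda>r. glim k f (s r)) \<longlonglongrightarrow> glim k f zs"
  proof (rule dist_bound_tendsto)
    fix r
    have "dist (s r ! i) (zs ! i) \<le> (\<Sum>j<Suc k. dist (s r ! j) (zs ! j))" if "i < Suc k" for i
      by (rule member_le_sum) (use that in auto)
    then show "dist (glim k f (s r)) (glim k f zs) \<le> (\<Sum>j<Suc k. dist (s r ! j) (zs ! j))"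
      by (intro gl_nonexp) (use l ls in auto)
  next
    have "(\<lambda>r. \<Sum>j<Suc k. dist (s r ! j) (zs ! j)) \<longlonglongrightarrow> (\<Sum>j<Suc k. 0)"
      by (intro tendsto_sum tendsto_dist_iff[THEN iffD1]) (use c in auto)
    then show "(\<lambda>r. \<Sum>j<Suc k. dist (s r ! j) (zs ! j)) \<longlonglongrightarrow> 0" by simp
  qed
qed

lemma gl_good: "good (Suc k) (glim k f)"
  unfolding good_def using gl_mean gl_nonexp gl_contr gl_pair by blast

lemma beta_ext_eq:
  assumes l: "length zs = Suc k"
  shows "beta_ext k f zs = glim k f zs"
proof -
  let ?P = "\<lambda>h. \<exists>g. is_kmean (Suc k) g \<and> kcontinuous (Suc k) g \<and> beta_extends k f g \<and>
                     h = (\<lambda>zs. if length zs = Suc k then g zs else undefined)"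
  let ?h = "\<lambda>zs. if length zs = Suc k then glim k f zs else undefined"
  have "(THE h. ?P h) = ?h"
  proof (rule the_equality)
    show "?P ?h" using gl_mean gl_cont gl_extends by (auto simp: is_kmean_def)
  next
    fix h assume "?P h"
    then obtain g where g: "beta_extends k f g" and h: "h = (\<lambda>zs. if length zs = Suc k then g zs else undefined)"
      by blast
    have "g zs = glim k f zs" if "length zs = Suc k" for zs
    proof -
      have "(\<lambda>r. (B ^^ r) zs ! 0) \<longlonglongrightarrow> g zs" using g that unfolding beta_extends_def by blast
      then show ?thesis using conv_S[OF that, of 0] LIMSEQ_unique by blast
    qed
    then show "h = ?h" using h by auto
  qed
  then show ?thesis using l by (simp add: beta_ext_def)
qed

end
end

lemma (in MS) good2:
  assumes mean: "\<And>x. mu x x = x"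
    and contr1: "\<And>a b c. dist (mu a c) (mu b c) \<le> \<rho> * dist a b"
    and contr2: "\<And>a b c. dist (mu c a) (mu c b) \<le> \<rho> * dist a b"
    and medial: "\<And>a b x y m'. mu a b = m' \<Longrightarrow> mu x y = m' \<Longrightarrow> mu (mu a x) (mu b y) = m'"
  shows "good 2 (\<lambda>xs. mu (xs!0) (xs!1))"
  unfolding good_def
proof (intro conjI allI impI)
  fix x show "mu (replicate 2 x ! 0) (replicate 2 x ! 1) = x" by (simp add: numeral_2_eq_2 mean)
next
  fix xs ys :: "'a list" and D
  assume "length xs = 2" "length ys = 2" and D: "\<forall>i<2. dist (xs ! i) (ys ! i) \<le> D"
  then show "dist (mu (xs ! 0) (xs ! 1)) (mu (ys ! 0) (ys ! 1)) \<le> D"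
  proof -
    have d0: "dist (xs!0) (ys!0) \<le> D" using D by simp
    have d1: "dist (xs!1) (ys!1) \<le> D" using D by simp
    show ?thesis by (rule order_trans[OF mu_nonexp]) (use d0 d1 in simp)
  qed
next
  fix xs :: "'a list" and j :: nat and y
  assume l: "length xs = 2" and j: "j < 2"
  then consider "j = 0" | "j = 1" by linarith
  then show "dist (mu (xs ! 0) (xs ! 1)) (mu (xs[j := y] ! 0) (xs[j := y] ! 1)) \<le> \<rho> * dist (xs ! j) y"
  proof cases
    case 1 then show ?thesis using l contr1 by (simp add: nth_list_update)
  next
    case 2 then show ?thesis using l contr2 by (simp add: nth_list_update)
  qed
next
  fix xs ys :: "'a list" and m'
  assume "length xs = 2" "length ys = 2" and P: "\<forall>i<2. mu (xs ! i) (ys ! i) = m'"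
  then show "mu (mu (xs ! 0) (xs ! 1)) (mu (ys ! 0) (ys ! 1)) = m'"
    using medial[of "xs!0" "ys!0" m' "xs!1" "ys!1"] by auto
qed

lemma (in MS) good_mu_n:
  assumes mean: "\<And>x. mu x x = x"
    and contr1: "\<And>a b c. dist (mu a c) (mu b c) \<le> \<rho> * dist a b"
    and contr2: "\<And>a b c. dist (mu c a) (mu c b) \<le> \<rho> * dist a b"
    and medial: "\<And>a b x y m'. mu a b = m' \<Longrightarrow> mu x y = m' \<Longrightarrow> mu (mu a x) (mu b y) = m'"
    and n: "2 \<le> n"
  shows "good n (mu_n mu n)"
  using n
proof (induction n rule: nat_induct_at_least)
  case base
  have e2: "mu_n mu 2 = (\<lambda>xs. mu (xs!0) (xs!1))" by (simp add: numeral_2_eq_2)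
  show ?case unfolding e2 by (rule good2[OF mean contr1 contr2 medial])
next
  case (Suc n)
  have e: "mu_n mu (Suc n) = beta_ext n (mu_n mu n)" using Suc(1) by simp
  show ?case unfolding e
    by (rule good_cong[OF gl_good[OF Suc(2)]]) (rule beta_ext_eq[OF Suc(2)])
qed

theorem proposition8p8:
  fixes mu :: "'a::complete_space \<Rightarrow> 'a \<Rightarrow> 'a" and \<rho> :: real
    and n :: nat and m :: 'a and xs ys :: "'a list"
  assumes rho: "0 < \<rho>" "\<rho> < 1"
    and mean: "\<And>x. mu x x = x"
    and nonexp: "\<And>a b c d. dist (mu a b) (mu c d) \<le> max (dist a c) (dist b d)"
    and contr1: "\<And>a b c. dist (mu a c) (mu b c) \<le> \<rho> * dist a b"
    and contr2: "\<And>a b c. dist (mu c a) (mu c b) \<le> \<rho> * dist a b"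
    and medial: "\<And>a b x y m'. mu a b = m' \<Longrightarrow> mu x y = m' \<Longrightarrow> mu (mu a x) (mu b y) = m'"
    and n: "2 \<le> n"
    and len: "length xs = n" "length ys = n"
    and pairs: "\<And>i. i < n \<Longrightarrow> mu (xs ! i) (ys ! i) = m"
  shows "mu (mu_n mu n xs) (mu_n mu n ys) = m"
proof -
  interpret MS mu \<rho> using rho nonexp by unfold_locales auto
  have "good n (mu_n mu n)" by (rule good_mu_n[OF mean contr1 contr2 medial n])
  then show ?thesis by (rule f_pair) (use len pairs in auto)
qed

end
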